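(* Let $d\ge1$, $s\in(0,1/2)$, $\Omega\subset\mathbb{R}^d$ a bounded domain and $g\in L^\infty(\Omega^c)$. For $H\ge1$ let $g_H$ be as in the context. Let $u$ be the minimizer of $I_s$ over $\mathbb{V}^g$ and $u^H$ the minimizer of $I_s$ over $\mathbb{V}^{g_H}$, and assume $u\in L^\infty(\mathbb{R}^d)$ and $\sup_{H\ge1}\|u^H\|_{L^\infty(\mathbb{R}^d)}<\infty$. Then there is a constant $C$ independent of $H$ such that \[ \big|I_s[u]-I_s[u^H]\big|\le C\,H^{-1-2s}\qquad\text{for all } H\ge 1. \]
   Context: $\Omega^c=\mathbb{R}^d\setminus\Omega$, $Q_\Omega := (\mathbb{R}^d\times\mathbb{R}^d)\setminus(\Omega^c\times\Omega^c)$, $F_s(\rho) := \int_0^\rho \frac{\rho-r}{(1+r^2)^{(d+1+2s)/2}}\,dr$, and $I_s[u] := \iint_{Q_\Omega} F_s\!\left(\frac{u(x)-u(y)}{|x-y|}\right)\frac{dx\,dy}{|x-y|^{d+2s-1}}$. For a function $g$ on $\Omega^c$, $\mathbb{V}^g := \{v:\mathbb{R}^d\to\mathbb{R} : v|_\Omega\in W^{2s}_1(\Omega),\ v=g \text{ in }\Omega^c\}$. For $H>0$, $\Omega_H$ is a bounded open set containing $\Omega$ such that $c_1H\le \operatorname{dist}(x,\overline\Omega)\le c_2 H$ for all $x\in\partial\Omega_H$, with fixed constants $0<c_1\le c_2$. The cutoff $\eta_H\in C^\infty(\Omega^c)$ satisfies $0\le\eta_H\le1$, $\operatorname{supp}\eta_H\subset\overline{\Omega}_{H+1}\setminus\Omega$,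 and $\eta_H=1$ on $\Omega_H\setminus\Omega$. Set $g_H:=g\eta_H$. *)

theory Defs
  imports "HOL-Analysis.Analysis"
begin

definition Fs :: "nat \<Rightarrow> real \<Rightarrow> real \<Rightarrow> real" where
  "Fs n s \<rho> = interval_lebesgue_integral lborel 0 (ereal \<rho>) (\<lambda>r. (\<rho> - r) / (1 + r^2) powr ((real n + 1 + 2 * s) / 2))"

definition QOmega :: "'a set \<Rightarrow> ('a \<times> 'a) set" where
  "QOmega \<Omega> = UNIV - ((- \<Omega>) \<times> (- \<Omega>))"

definition Is :: "real \<Rightarrow> 'a::euclidean_space set \<Rightarrow> ('a \<Rightarrow> real) \<Rightarrow> ennreal" where
  "Is s \<Omega> u = (\<integral>\<^sup>+ p \<in> QOmega \<Omega>.
      ennreal (Fs DIM('a) s ((u (fst p) - u (snd p)) / norm (fst p - snd p))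
               / norm (fst p - snd p) powr (real DIM('a) + 2 * s - 1))
      \<partial>(lborel \<Otimes>\<^sub>M lborel))"

definition frac_W1 :: "real \<Rightarrow> 'a::euclidean_space set \<Rightarrow> ('a \<Rightarrow> real) \<Rightarrow> bool" where
  "frac_W1 \<sigma> \<Omega> v \<longleftrightarrow> set_integrable lborel \<Omega> v \<and>
     (\<integral>\<^sup>+ p \<in> \<Omega> \<times> \<Omega>. ennreal (\<bar>v (fst p) - v (snd p)\<bar> / norm (fst p - snd p) powr (real DIM('a) + \<sigma>))
        \<partial>(lborel \<Otimes>\<^sub>M lborel)) < \<infinity>"

definition Vg :: "real \<Rightarrow> 'a::euclidean_space set \<Rightarrow> ('a \<Rightarrow> real) \<Rightarrow> ('a \<Rightarrow> real) set" where
  "Vg s \<Omega> g = {v. frac_W1 (2 * s) \<Omega> v \<and> (\<forall>x\<in>- \<Omega>. v x = g x)}"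

definition is_minimizer :: "real \<Rightarrow> 'a::euclidean_space set \<Rightarrow> ('a \<Rightarrow> real) \<Rightarrow> ('a \<Rightarrow> real) \<Rightarrow> bool" where
  "is_minimizer s \<Omega> g u \<longleftrightarrow> u \<in> Vg s \<Omega> g \<and> (\<forall>v\<in>Vg s \<Omega> g. Is s \<Omega> u \<le> Is s \<Omega> v)"

fun iter_dd :: "'a::euclidean_space list \<Rightarrow> ('a \<Rightarrow> real) \<Rightarrow> 'a \<Rightarrow> real" where
  "iter_dd [] f = f"
| "iter_dd (v # vs) f = (\<lambda>x. frechet_derivative (iter_dd vs f) (at x) v)"

definition smooth_fun :: "('a::euclidean_space \<Rightarrow> real) \<Rightarrow> bool" where
  "smooth_fun f \<longleftrightarrow> (\<forall>vs x. iter_dd vs f differentiable (at x))"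

definition smooth_on_set :: "'a::euclidean_space set \<Rightarrow> ('a \<Rightarrow> real) \<Rightarrow> bool" where
  "smooth_on_set S f \<longleftrightarrow> (\<exists>F. smooth_fun F \<and> (\<forall>x\<in>S. f x = F x))"

end

theory Submission
  imports Defs
begin



lemma set_int_bound:
  fixes f :: "real \<Rightarrow> real"
  assumes "a \<le> b" "K \<ge> 0" "\<And>x. a < x \<Longrightarrow> x < b \<Longrightarrow> \<bar>f x\<bar> \<le> K"
  shows "\<bar>set_lebesgue_integral lborel {a<..<b} f\<bar> \<le> K * (b - a)"
proof (cases "integrable lborel (\<lambda>x. indicator {a<..<b} x *\<^sub>R f x)")
  case True
  have "ennreal \<bar>set_lebesgue_integral lborel {a<..<b} f\<bar> \<le> (\<integral>\<^sup>+x. norm (indicator {a<..<b} x *\<^sub>R f x) \<partial>lborel)"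
    using integral_norm_bound_ennreal[OF True] unfolding set_lebesgue_integral_def by simp
  also have "\<dots> \<le> (\<integral>\<^sup>+x. ennreal K * indicator {a<..<b} x \<partial>lborel)"
    by (intro nn_integral_mono) (auto simp: indicator_def assms(3) intro!: ennreal_leI)
  also have "\<dots> = ennreal (K * (b - a))"
    using assms by (simp add: nn_integral_cmult ennreal_mult)
  finally show ?thesis by (simp add: ennreal_le_iff assms)
next
  case False
  then show ?thesis using assms unfolding set_lebesgue_integral_def
    by (simp add: not_integrable_integral_eq)
qed


lemma Fs_bound:
  assumes "s > 0"
  shows "Fs n s \<rho> \<le> \<rho>^2"
proof -
  define a where "a = (real n + 1 + 2 * s) / 2"
  define f where "f = (\<lambda>r::real. (\<rho> - r) / (1 + r^2) powr a)"
  have a: "a > 0" using assms by (simp add: a_def)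
  have den: "(1 + r^2) powr a \<ge> 1" for r :: real
    using a by (intro ge_one_powr_ge_zero) auto
  have fb: "\<bar>f r\<bar> \<le> \<bar>\<rho> - r\<bar>" for r
  proof -
    have "\<bar>f r\<bar> = \<bar>\<rho> - r\<bar> / (1 + r^2) powr a"
      using den[of r] by (simp add: f_def abs_div)
    also have "\<dots> \<le> \<bar>\<rho> - r\<bar>" using den[of r]
      by (simp add: divide_le_eq mult_le_cancel_left1)
    finally show ?thesis .
  qed
  have F: "Fs n s \<rho> = interval_lebesgue_integral lborel (ereal 0) (ereal \<rho>) f"
    unfolding Fs_def f_def a_def by (simp add: zero_ereal_def)
  show ?thesis
  proof (cases "0 \<le> \<rho>")
    case True
    have e: "Fs n s \<rho> = set_lebesgue_integral lborel {0<..<\<rho>} f"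
      unfolding F interval_lebesgue_integral_def using True by simp
    have "\<bar>set_lebesgue_integral lborel {0<..<\<rho>} f\<bar> \<le> \<rho> * (\<rho> - 0)"
    proof (rule set_int_bound)
      fix x assume "0 < x" "x < \<rho>"
      then show "\<bar>f x\<bar> \<le> \<rho>" using fb[of x] by simp
    qed (use True in auto)
    then show ?thesis unfolding e by (simp add: power2_eq_square)
  next
    case False
    have e: "Fs n s \<rho> = - set_lebesgue_integral lborel {\<rho><..<0} f"
      unfolding F interval_lebesgue_integral_def using False by simp
    have "\<bar>set_lebesgue_integral lborel {\<rho><..<0} f\<bar> \<le> (-\<rho>) * (0 - \<rho>)"
    proof (rule set_int_bound)
      fix x assume "\<rho> < x" "x < 0"
      then show "\<bar>f x\<bar> \<le> -\<rho>" using fb[of x] by simp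
    qed (use False in auto)
    then show ?thesis unfolding e by (simp add: power2_eq_square)
  qed
qed


lemma nn_integral_subadd:
  assumes B: "B \<in> borel_measurable M"
  shows "(\<integral>\<^sup>+x. f x + B x \<partial>M) \<le> integral\<^sup>N M f + integral\<^sup>N M B"
  unfolding nn_integral_def[of M "\<lambda>x. f x + B x"]
proof (rule SUP_least, safe)
  fix g assume g: "simple_function M g" "g \<le> (\<lambda>x. f x + B x)"
  have gm: "g \<in> borel_measurable M" using g(1) by (rule borel_measurable_simple_function)
  define h where "h x = (if B x = \<infinity> then 0 else g x - B x)" for x
  have hm: "h \<in> borel_measurable M" unfolding h_def using gm B by measurable
  have "integral\<^sup>S M g = integral\<^sup>N M g" using g(1) by (simp add: nn_integral_eq_simple_integral)
  also have "\<dots> \<le> (\<integral>\<^sup>+x. h x + B x \<partial>M)"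
    by (intro nn_integral_mono) (auto simp: h_def diff_add_self_ennreal)
  also have "\<dots> = integral\<^sup>N M h + integral\<^sup>N M B"
    using hm B by (intro nn_integral_add) auto
  also have "integral\<^sup>N M h \<le> integral\<^sup>N M f"
    using g(2) by (intro nn_integral_mono) (auto simp: le_fun_def h_def ennreal_minus_le_iff add.commute)
  finally show "integral\<^sup>S M g \<le> integral\<^sup>N M f + integral\<^sup>N M B" by (simp add: add_right_mono)
qed

lemma AE_fst_lborel:
  assumes "AE x in (lborel::'a::euclidean_space measure). P x"
  shows "AE p in (lborel \<Otimes>\<^sub>M (lborel::'a measure)). P (fst p)"
proof -
  obtain N where N: "{x\<in>space lborel. \<not> P x} \<subseteq> N" "emeasure lborel N = 0" "N \<in> sets lborel"
    using assms by (auto elim!: AE_E)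
  show ?thesis
  proof (rule AE_I[where N="N \<times> UNIV"])
    show "{x \<in> space (lborel \<Otimes>\<^sub>M lborel). \<not> P (fst x)} \<subseteq> N \<times> UNIV"
      using N(1) by (auto simp: space_pair_measure)
    show "emeasure (lborel \<Otimes>\<^sub>M lborel) (N \<times> UNIV) = 0"
      using N by (subst lborel.emeasure_pair_measure_Times) auto
    show "N \<times> UNIV \<in> sets (lborel \<Otimes>\<^sub>M lborel)" using N by auto
  qed
qed

lemma AE_snd_lborel:
  assumes "AE x in (lborel::'a::euclidean_space measure). P x"
  shows "AE p in (lborel \<Otimes>\<^sub>M (lborel::'a measure)). P (snd p)"
proof -
  obtain N where N: "{x\<in>space lborel. \<not> P x} \<subseteq> N" "emeasure lborel N = 0" "N \<in> sets lborel"
    using assms by (auto elim!: AE_E)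
  show ?thesis
  proof (rule AE_I[where N="UNIV \<times> N"])
    show "{x \<in> space (lborel \<Otimes>\<^sub>M lborel). \<not> P (snd x)} \<subseteq> UNIV \<times> N"
      using N(1) by (auto simp: space_pair_measure)
    show "emeasure (lborel \<Otimes>\<^sub>M lborel) (UNIV \<times> N) = 0"
      using N by (subst lborel.emeasure_pair_measure_Times) auto
    show "UNIV \<times> N \<in> sets (lborel \<Otimes>\<^sub>M lborel)" using N by auto
  qed
qed



lemma dyadic_term:
  fixes R q V :: real and d k :: nat
  assumes "R > 0"
  shows "(R*2^k) powr (-q) * (V * (R*2^Suc k)^d) = V * 2^d * R powr (real d - q) * (2 powr (real d - q))^k"
proof -
  have a: "(R*2^k) powr (-q) = R powr (-q) * 2 powr (- q * real k)"
    using assms by (simp add: powr_mult powr_realpow[symmetric] powr_powr mult.commute)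
  have b: "(R*2^Suc k)^d = R powr real d * 2 powr real d * 2 powr (real d * real k)"
    using assms by (simp add: power_mult_distrib powr_realpow[symmetric] powr_powr power_add
        powr_add[symmetric] algebra_simps power_mult[symmetric] mult.commute[of d k])
  have c: "(2 powr (real d - q))^k = 2 powr ((real d - q) * real k)"
    by (simp add: powr_realpow[symmetric] powr_powr)
  have e1: "R powr (real d - q) = R powr real d * R powr (-q)"
    using assms by (simp add: powr_add[symmetric])
  have e2: "2 powr ((real d - q) * real k) = 2 powr (real d * real k) * 2 powr (- q * real k)"
    by (simp add: powr_add[symmetric] algebra_simps)
  have e3: "(2::real)^d = 2 powr real d" by (simp add: powr_realpow)
  show ?thesis unfolding a b c e1 e2 e3 by (simp only: ac_simps)
qed

lemma tail_bound:
  fixes R q :: real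
  assumes R: "R > 0" and q: "q > real DIM('a)"
  shows "(\<integral>\<^sup>+z. indicator {z::'a::euclidean_space. R \<le> norm z} z * ennreal (norm z powr (-q)) \<partial>lborel)
     \<le> ennreal (unit_ball_vol DIM('a) * 2^DIM('a) * R powr (real DIM('a) - q) * (1 / (1 - 2 powr (real DIM('a) - q))))"
proof -
  define d where "d = DIM('a)"
  define V where "V = unit_ball_vol (real d)"
  define x where "x = 2 powr (real d - q)"
  define A where "A = V * 2^d * R powr (real d - q)"
  have V: "V \<ge> 0" unfolding V_def unit_ball_vol_def by (auto intro!: divide_nonneg_nonneg)
  have x0: "0 \<le> x" "x < 1" using q powr_less_mono[of "real d - q" 0 2] unfolding x_def d_def by auto
  define t where "t k z = ennreal ((R*2^k) powr (-q)) * indicator (ball (0::'a) (R*2^Suc k)) z" for k z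
  have pw: "indicator {z::'a. R \<le> norm z} z * ennreal (norm z powr (-q)) \<le> (\<Sum>k. t k z)" for z
  proof (cases "R \<le> norm z")
    case True
    obtain n where n: "norm z / R < 2^n" using real_arch_pow[of 2 "norm z / R"] by auto
    define m where "m = (LEAST n. norm z < R * 2^n)"
    have m1: "norm z < R * 2^m" unfolding m_def
      by (rule LeastI[of _ n]) (use n R in \<open>simp add: divide_less_eq mult.commute\<close>)
    have "m \<noteq> 0"
    proof
      assume "m = 0" then show False using m1 True by simp
    qed
    then obtain k where k: "m = Suc k" by (cases m) auto
    have k2: "R * 2^k \<le> norm z"
    proof (rule ccontr)
      assume "\<not> R * 2^k \<le> norm z"
      then have "m \<le> k" unfolding m_def by (intro Least_le) simp
      then show False using k by simp
    qed
    have "indicator {z::'a. R \<le> norm z} z * ennreal (norm z powr (-q)) = ennreal (norm z powr (-q))"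
      using True by simp
    also have "\<dots> \<le> t k z"
    proof -
      have zb: "z \<in> ball 0 (R*2^Suc k)" using m1 k by simp
      have "norm z powr (-q) \<le> (R*2^k) powr (-q)"
        by (rule powr_mono2') (use q R k2 in auto)
      then show ?thesis using zb unfolding t_def by (simp add: ennreal_leI)
    qed
    also have "\<dots> \<le> (\<Sum>i<Suc k. t i z)" by simp
    also have "\<dots> \<le> (\<Sum>k. t k z)" unfolding suminf_eq_SUP by (rule SUP_upper) auto
    finally show ?thesis .
  qed simp
  have "(\<integral>\<^sup>+z. indicator {z::'a. R \<le> norm z} z * ennreal (norm z powr (-q)) \<partial>lborel)
      \<le> (\<integral>\<^sup>+z. (\<Sum>k. t k z) \<partial>lborel)"
    by (intro nn_integral_mono pw)
  also have "\<dots> = (\<Sum>k. integral\<^sup>N lborel (t k))"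
  proof (rule nn_integral_suminf[of t lborel])
    fix k
    have "t k = (\<lambda>z. ennreal ((R*2^k) powr (-q)) * indicator (ball (0::'a) (R*2^Suc k)) z)"
      by (rule ext) (simp add: t_def)
    also have "\<dots> \<in> borel_measurable lborel"
      by (rule borel_measurable_times_ennreal) (auto intro!: borel_measurable_indicator)
    finally show "t k \<in> borel_measurable lborel" .
  qed
  also have "\<dots> = (\<Sum>k. ennreal (A * x^k))"
  proof (rule suminf_cong)
    fix k
    have "integral\<^sup>N lborel (t k) = ennreal ((R*2^k) powr (-q)) * emeasure lborel (ball (0::'a) (R*2^Suc k))"
      unfolding t_def by (rule nn_integral_cmult_indicator) simp
    also have "\<dots> = ennreal ((R*2^k) powr (-q) * (V * (R*2^Suc k)^d))"
      using R V by (subst emeasure_ball) (auto simp: V_def d_def ennreal_mult[symmetric])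
    also have "\<dots> = ennreal (A * x^k)"
      unfolding A_def x_def by (rule arg_cong[where f=ennreal], rule dyadic_term[OF R])
    finally show "integral\<^sup>N lborel (t k) = ennreal (A * x^k)" .
  qed
  also have "\<dots> = ennreal (\<Sum>k. A * x^k)"
    using x0 V R by (intro suminf_ennreal2 summable_mult summable_geometric mult_nonneg_nonneg) (auto simp: A_def)
  also have "(\<Sum>k. A * x^k) = A * (1 / (1 - x))"
    using x0 by (simp add: suminf_mult suminf_geometric summable_geometric)
  finally show ?thesis unfolding A_def x_def V_def d_def .
qed



lemma G_bound:
  fixes a b n M s :: real and d :: nat
  assumes s: "s > 0" and n: "n > 0" and a: "\<bar>a\<bar> \<le> M" and b: "\<bar>b\<bar> \<le> M"
  shows "Fs d s ((a - b) / n) / n powr (real d + 2 * s - 1) \<le> 4 * M^2 * n powr (- (real d + 2 * s + 1))"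
proof -
  define e where "e = real d + 2 * s - 1"
  have ab: "\<bar>a - b\<bar> \<le> 2 * M" using a b by linarith
  have "((a - b) / n)^2 = \<bar>a - b\<bar>^2 / n^2" by (simp add: power_divide)
  also have "\<dots> \<le> (2*M)^2 / n^2"
    by (intro divide_right_mono power_mono ab) auto
  finally have "Fs d s ((a - b) / n) \<le> 4 * M^2 / n^2"
    using Fs_bound[OF s, of d "(a - b) / n"] by (simp add: power_mult_distrib)
  then have "Fs d s ((a - b) / n) / n powr e \<le> 4 * M^2 / n^2 / n powr e"
    by (intro divide_right_mono) auto
  also have "4 * M^2 / n^2 / n powr e = 4 * M^2 * n powr (- (e + 2))"
  proof -
    have "n powr (- (e + 2)) = 1 / (n powr e * n powr 2)"
      using n by (simp only: powr_minus_divide powr_add)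
    also have "n powr 2 = n^2" using n by (simp add: powr_numeral)
    finally show ?thesis by simp
  qed
  finally show ?thesis unfolding e_def by (simp add: algebra_simps)
qed

lemma far_apart:
  fixes x y :: "'a::euclidean_space"
  assumes "x \<in> \<Omega>" "\<Omega> \<subseteq> U" "y \<notin> U"
    and fr: "\<forall>z\<in>frontier U. R \<le> infdist z (closure \<Omega>)"
  shows "R \<le> norm (x - y)"
proof -
  have "closed_segment x y \<inter> frontier U \<noteq> {}"
  proof (rule connected_Int_frontier)
    show "connected (closed_segment x y)" by simp
    have "x \<in> closed_segment x y" "x \<in> U" using assms(1,2) by auto
    then show "closed_segment x y \<inter> U \<noteq> {}" by blast
    have "y \<in> closed_segment x y" by simp
    then show "closed_segment x y - U \<noteq> {}" using assms(3) by blast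
  qed
  then obtain z where z: "z \<in> closed_segment x y" "z \<in> frontier U" by auto
  have "R \<le> infdist z (closure \<Omega>)" using fr z by auto
  also have "\<dots> \<le> dist z x" using assms(1) by (intro infdist_le) (auto intro: closure_subset[THEN subsetD])
  also have "\<dots> \<le> dist x y" using dist_in_closed_segment[OF z(1)] by simp
  finally show ?thesis by (simp add: dist_norm)
qed

lemma translate_int:
  fixes h :: "'a::euclidean_space \<Rightarrow> ennreal"
  assumes h: "h \<in> borel_measurable borel"
  shows "(\<integral>\<^sup>+y. h (y - x) \<partial>lborel) = integral\<^sup>N lborel h"
proof -
  have "(\<integral>\<^sup>+y. h (y - x) \<partial>lborel) = (\<integral>\<^sup>+y. h ((+) (-x) y) \<partial>lborel)" by simp
  also have "\<dots> = (\<integral>\<^sup>+y. h y \<partial>distr lborel borel ((+) (-x)))"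
    using h by (subst nn_integral_distr) auto
  finally show ?thesis by (simp add: lborel_distr_plus)
qed




lemma h_meas:
  fixes R q :: real
  shows "(\<lambda>z::'a::euclidean_space. indicator {z. R \<le> norm z} z * ennreal (norm z powr (-q))) \<in> borel_measurable borel"
  by measurable

lemma one_side:
  fixes \<Omega> U :: "'a::euclidean_space set" and s R M m :: real and g1 g2 w a :: "'a \<Rightarrow> real"
  assumes s: "s > 0" and R: "R > 0" and M: "M \<ge> 0"
    and \<Omega>m[measurable]: "\<Omega> \<in> sets borel" and m: "emeasure lborel \<Omega> = ennreal m" "m \<ge> 0"
    and far: "\<And>x y. x \<in> \<Omega> \<Longrightarrow> y \<notin> U \<Longrightarrow> R \<le> norm (x - y)"
    and geq: "\<And>y. y \<notin> \<Omega> \<Longrightarrow> y \<in> U \<Longrightarrow> g1 y = g2 y"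
    and w_min: "is_minimizer s \<Omega> g1 w" and a_min: "is_minimizer s \<Omega> g2 a"
    and wb: "AE x in lborel. \<bar>w x\<bar> \<le> M" and gb: "AE x in lborel. x \<notin> \<Omega> \<longrightarrow> \<bar>g2 x\<bar> \<le> M"
  shows "Is s \<Omega> a \<le> Is s \<Omega> w + ennreal (8 * m * M^2 *
     (unit_ball_vol DIM('a) * 2^DIM('a) * R powr (- 1 - 2 * s) *
       (1 / (1 - 2 powr (real DIM('a) - (real DIM('a) + 2 * s + 1))))))"
proof -
  define d where "d = DIM('a)"
  define q where "q = real d + 2 * s + 1"
  define K where "K = unit_ball_vol DIM('a) * 2^DIM('a) * R powr (- 1 - 2 * s) *
       (1 / (1 - 2 powr (real DIM('a) - (real DIM('a) + 2 * s + 1))))"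
  define v where "v x = (if x \<in> \<Omega> then w x else g2 x)" for x
  define G where "G f p = ennreal (Fs d s ((f (fst p) - f (snd p)) / norm (fst p - snd p))
      / norm (fst p - snd p) powr (real d + 2 * s - 1)) * indicator (QOmega \<Omega>) p" for f p
  have IsG: "Is s \<Omega> f = integral\<^sup>N (lborel \<Otimes>\<^sub>M lborel) (G f)" for f
    unfolding Is_def G_def[abs_def] d_def by simp
  have wV: "w \<in> Vg s \<Omega> g1" using w_min by (simp add: is_minimizer_def)
  then have wg1: "\<And>y. y \<notin> \<Omega> \<Longrightarrow> w y = g1 y" by (auto simp: Vg_def)
  have vV: "v \<in> Vg s \<Omega> g2"
  proof -
    have fw: "frac_W1 (2 * s) \<Omega> w" using wV by (simp add: Vg_def)
    have e1: "(\<lambda>x. indicator \<Omega> x *\<^sub>R v x) = (\<lambda>x. indicator \<Omega> x *\<^sub>R w x)"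
      by (auto simp: v_def indicator_def fun_eq_iff)
    have e2: "(\<lambda>p. ennreal (\<bar>v (fst p) - v (snd p)\<bar> / norm (fst p - snd p) powr (real DIM('a) + 2 * s)) * indicator (\<Omega> \<times> \<Omega>) p)
       = (\<lambda>p. ennreal (\<bar>w (fst p) - w (snd p)\<bar> / norm (fst p - snd p) powr (real DIM('a) + 2 * s)) * indicator (\<Omega> \<times> \<Omega>) p)"
      by (auto simp: v_def indicator_def fun_eq_iff)
    have "frac_W1 (2 * s) \<Omega> v"
      using fw unfolding frac_W1_def set_integrable_def e1 e2 by simp
    then show ?thesis by (auto simp: Vg_def v_def)
  qed
  have step1: "Is s \<Omega> a \<le> Is s \<Omega> v" using a_min vV by (simp add: is_minimizer_def)
  define h where "h z = indicator {z. R \<le> norm z} z * ennreal (norm z powr (-q))" for z :: 'a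
  have hm[measurable]: "h \<in> borel_measurable borel" unfolding h_def[abs_def] by (rule h_meas)
  define B where "B p = ennreal (4*M^2) * (indicator \<Omega> (fst p) * h (snd p - fst p) + indicator \<Omega> (snd p) * h (fst p - snd p))" for p
  have Bm: "B \<in> borel_measurable (lborel \<Otimes>\<^sub>M lborel)" unfolding B_def[abs_def] by measurable
  have vb: "AE x in lborel. \<bar>v x\<bar> \<le> M" using wb gb by eventually_elim (auto simp: v_def)
  have vb2: "AE p in lborel \<Otimes>\<^sub>M lborel. \<bar>v (fst p)\<bar> \<le> M \<and> \<bar>v (snd p)\<bar> \<le> M"
    using AE_fst_lborel[OF vb] AE_snd_lborel[OF vb] by eventually_elim auto
  have Gb: "G v (x, y) \<le> ennreal (4 * M^2 * norm (x - y) powr (-q))"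
    if "\<bar>v x\<bar> \<le> M" "\<bar>v y\<bar> \<le> M" "x \<noteq> y" for x y
  proof -
    have "G v (x, y) \<le> ennreal (Fs d s ((v x - v y) / norm (x - y)) / norm (x - y) powr (real d + 2 * s - 1))"
      unfolding G_def by (simp add: indicator_def)
    also have "\<dots> \<le> ennreal (4 * M^2 * norm (x - y) powr (-q))"
      unfolding q_def using G_bound[OF s _ that(1,2), of "norm (x - y)" d] that(3)
      by (intro ennreal_leI) simp
    finally show ?thesis .
  qed
  have pw: "AE p in lborel \<Otimes>\<^sub>M lborel. G v p \<le> G w p + B p"
    using vb2
  proof eventually_elim
    case (elim p)
    obtain x y where p: "p = (x, y)" by (cases p)
    have vx: "\<bar>v x\<bar> \<le> M" and vy: "\<bar>v y\<bar> \<le> M" using elim p by auto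
    show ?case
    proof (cases "p \<in> QOmega \<Omega> \<and> \<not> (v x = w x \<and> v y = w y)")
      case False
      then have "G v p = G w p" unfolding G_def p by (auto simp: indicator_def)
      then show ?thesis by (simp add: add_increasing2)
    next
      case True
      then have Q: "x \<in> \<Omega> \<or> y \<in> \<Omega>" unfolding p QOmega_def by auto
      show ?thesis
      proof (cases "x \<in> \<Omega>")
        case xO: True
        then have "v x = w x" by (simp add: v_def)
        with True have vy': "v y \<noteq> w y" by auto
        then have yO: "y \<notin> \<Omega>" by (auto simp: v_def)
        have yU: "y \<notin> U"
        proof
          assume "y \<in> U"
          then have "v y = w y" using yO geq wg1 by (simp add: v_def)
          with vy' show False by simp
        qed
        have Rn: "R \<le> norm (x - y)" using far[OF xO yU] .
        then have xy: "x \<noteq> y" using R by auto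
        have "G v p \<le> ennreal (4 * M^2 * norm (x - y) powr (-q))" unfolding p by (rule Gb[OF vx vy xy])
        also have "\<dots> = ennreal (4*M^2) * (indicator \<Omega> x * h (y - x))"
          using Rn xO by (simp add: h_def norm_minus_commute ennreal_mult)
        also have "\<dots> \<le> B p" unfolding B_def p
          by (intro mult_left_mono) (auto simp: add_increasing2)
        also have "\<dots> \<le> G w p + B p" by (simp add: add_increasing)
        finally show ?thesis .
      next
        case xO: False
        then have yO: "y \<in> \<Omega>" using Q by auto
        then have "v y = w y" by (simp add: v_def)
        with True have vx': "v x \<noteq> w x" by auto
        have xU: "x \<notin> U"
        proof
          assume "x \<in> U"
          then have "v x = w x" using xO geq wg1 by (simp add: v_def)
          with vx' show False by simp
        qed
        have Rn: "R \<le> norm (x - y)" using far[OF yO xU] by (simp add: norm_minus_commute)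
        then have xy: "x \<noteq> y" using R by auto
        have "G v p \<le> ennreal (4 * M^2 * norm (x - y) powr (-q))" unfolding p by (rule Gb[OF vx vy xy])
        also have "\<dots> = ennreal (4*M^2) * (indicator \<Omega> y * h (x - y))"
          using Rn yO by (simp add: h_def ennreal_mult)
        also have "\<dots> \<le> B p" unfolding B_def p
          by (intro mult_left_mono) (auto simp: add_increasing)
        also have "\<dots> \<le> G w p + B p" by (simp add: add_increasing)
        finally show ?thesis .
      qed
    qed
  qed
  define T where "T = integral\<^sup>N lborel h"
  have TK: "T \<le> ennreal K"
  proof -
    have "T \<le> ennreal (unit_ball_vol DIM('a) * 2^DIM('a) * R powr (real DIM('a) - q) * (1 / (1 - 2 powr (real DIM('a) - q))))"
      unfolding T_def h_def
      by (rule tail_bound[OF R]) (use s in \<open>simp add: q_def d_def\<close>)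
    moreover have e1: "- 1 - 2 * s = real DIM('a) - q" unfolding q_def d_def by simp
    moreover have e2: "real DIM('a) - (real DIM('a) + 2 * s + 1) = real DIM('a) - q"
      unfolding q_def d_def by simp
    ultimately show ?thesis unfolding K_def by (simp only: e1 e2)
  qed
  have I1: "(\<integral>\<^sup>+p. indicator \<Omega> (fst p) * h (snd p - fst p) \<partial>(lborel \<Otimes>\<^sub>M lborel)) = emeasure lborel \<Omega> * T"
  proof -
    have "(\<integral>\<^sup>+p. indicator \<Omega> (fst p) * h (snd p - fst p) \<partial>(lborel \<Otimes>\<^sub>M lborel))
        = (\<integral>\<^sup>+x. \<integral>\<^sup>+y. indicator \<Omega> x * h (y - x) \<partial>lborel \<partial>lborel)"
      by (subst lborel.nn_integral_fst[symmetric]) (auto simp: split_beta')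
    also have "\<dots> = (\<integral>\<^sup>+x. T * indicator \<Omega> x \<partial>lborel)"
      by (intro nn_integral_cong) (simp add: nn_integral_cmult translate_int T_def mult.commute)
    also have "\<dots> = T * emeasure lborel \<Omega>" by (simp add: nn_integral_cmult_indicator)
    finally show ?thesis by (simp add: mult.commute)
  qed
  have I2: "(\<integral>\<^sup>+p. indicator \<Omega> (snd p) * h (fst p - snd p) \<partial>(lborel \<Otimes>\<^sub>M lborel)) = emeasure lborel \<Omega> * T"
  proof -
    have "(\<integral>\<^sup>+p. indicator \<Omega> (snd p) * h (fst p - snd p) \<partial>(lborel \<Otimes>\<^sub>M lborel))
        = (\<integral>\<^sup>+y. \<integral>\<^sup>+x. indicator \<Omega> y * h (x - y) \<partial>lborel \<partial>lborel)"
      by (subst lborel_pair.nn_integral_snd[symmetric]) (auto simp: split_beta')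
    also have "\<dots> = (\<integral>\<^sup>+y. T * indicator \<Omega> y \<partial>lborel)"
      by (intro nn_integral_cong) (simp add: nn_integral_cmult translate_int T_def mult.commute)
    also have "\<dots> = T * emeasure lborel \<Omega>" by (simp add: nn_integral_cmult_indicator)
    finally show ?thesis by (simp add: mult.commute)
  qed
  have IB: "integral\<^sup>N (lborel \<Otimes>\<^sub>M lborel) B = ennreal (4*M^2) * (emeasure lborel \<Omega> * T + emeasure lborel \<Omega> * T)"
    unfolding B_def by (simp add: nn_integral_cmult nn_integral_add I1 I2)
  have "Is s \<Omega> v = integral\<^sup>N (lborel \<Otimes>\<^sub>M lborel) (G v)" by (rule IsG)
  also have "\<dots> \<le> (\<integral>\<^sup>+p. G w p + B p \<partial>(lborel \<Otimes>\<^sub>M lborel))"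
    by (rule nn_integral_mono_AE[OF pw])
  also have "\<dots> \<le> integral\<^sup>N (lborel \<Otimes>\<^sub>M lborel) (G w) + integral\<^sup>N (lborel \<Otimes>\<^sub>M lborel) B"
    by (rule nn_integral_subadd[OF Bm])
  also have "\<dots> = Is s \<Omega> w + integral\<^sup>N (lborel \<Otimes>\<^sub>M lborel) B" by (simp add: IsG)
  also have "integral\<^sup>N (lborel \<Otimes>\<^sub>M lborel) B \<le> ennreal (8 * m * M^2 * K)"
  proof -
    have "integral\<^sup>N (lborel \<Otimes>\<^sub>M lborel) B = ennreal (8 * m * M^2) * T"
    proof -
      have "ennreal (4*M^2) * (ennreal m * T + ennreal m * T) = (ennreal (4*M^2) * (ennreal m + ennreal m)) * T"
        by (simp add: algebra_simps)
      also have "ennreal m + ennreal m = ennreal (m + m)" using m(2) by (intro ennreal_plus[symmetric]) auto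
      also have "ennreal (4*M^2) * ennreal (m + m) = ennreal (4*M^2 * (m + m))"
        using m(2) by (intro ennreal_mult[symmetric]) auto
      also have "4*M^2 * (m + m) = 8 * m * M^2" by simp
      finally show ?thesis unfolding IB m .
    qed
    also have "\<dots> \<le> ennreal (8 * m * M^2) * ennreal K" by (intro mult_left_mono TK) auto
    also have "\<dots> = ennreal (8 * m * M^2 * K)" using m(2) by (intro ennreal_mult'[symmetric]) simp
    finally show ?thesis .
  qed
  finally show ?thesis using step1 unfolding K_def by (simp add: add_left_mono order_trans)
qed



theorem mainTheorem4:
  fixes \<Omega> :: "'a::euclidean_space set"
    and s :: real
    and g :: "'a \<Rightarrow> real"
    and OmH :: "real \<Rightarrow> 'a set"
    and eta :: "real \<Rightarrow> 'a \<Rightarrow> real"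
    and c1 c2 :: real
    and u :: "'a \<Rightarrow> real"
    and uH :: "real \<Rightarrow> 'a \<Rightarrow> real"
  assumes s: "0 < s" "s < 1/2"
    and dom: "open \<Omega>" "connected \<Omega>" "bounded \<Omega>" "\<Omega> \<noteq> {}"
    and g_meas: "(\<lambda>x. indicator (- \<Omega>) x * g x) \<in> borel_measurable lborel"
    and g_bdd: "\<exists>M. AE x in lborel. x \<in> - \<Omega> \<longrightarrow> \<bar>g x\<bar> \<le> M"
    and c: "0 < c1" "c1 \<le> c2"
    and OmH: "\<And>H. H > 0 \<Longrightarrow> open (OmH H) \<and> bounded (OmH H) \<and> \<Omega> \<subseteq> OmH H \<and>
               (\<forall>x\<in>frontier (OmH H). c1 * H \<le> infdist x (closure \<Omega>) \<and> infdist x (closure \<Omega>) \<le> c2 * H)"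
    and eta: "\<And>H. H > 0 \<Longrightarrow> smooth_on_set (- \<Omega>) (eta H) \<and>
               (\<forall>x\<in>- \<Omega>. 0 \<le> eta H x \<and> eta H x \<le> 1) \<and>
               closure {x \<in> - \<Omega>. eta H x \<noteq> 0} \<subseteq> closure (OmH (H + 1)) - \<Omega> \<and>
               (\<forall>x\<in>OmH H - \<Omega>. eta H x = 1)"
    and u_min: "is_minimizer s \<Omega> g u"
    and uH_min: "\<And>H. H \<ge> 1 \<Longrightarrow> is_minimizer s \<Omega> (\<lambda>x. g x * eta H x) (uH H)"
    and u_bdd: "\<exists>M. AE x in lborel. \<bar>u x\<bar> \<le> M"
    and uH_bdd: "\<exists>M. \<forall>H\<ge>1. AE x in lborel. \<bar>uH H x\<bar> \<le> M"
  shows "\<exists>C::real. \<forall>H\<ge>1.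
           Is s \<Omega> u \<le> Is s \<Omega> (uH H) + ennreal (C * H powr (-1 - 2 * s)) \<and>
           Is s \<Omega> (uH H) \<le> Is s \<Omega> u + ennreal (C * H powr (-1 - 2 * s))"
proof -
  obtain Mg where Mg: "AE x in lborel. x \<in> - \<Omega> \<longrightarrow> \<bar>g x\<bar> \<le> Mg" using g_bdd by blast
  obtain Mu where Mu: "AE x in lborel. \<bar>u x\<bar> \<le> Mu" using u_bdd by blast
  obtain MH where MH: "\<forall>H\<ge>1. AE x in lborel. \<bar>uH H x\<bar> \<le> MH" using uH_bdd by blast
  define M where "M = max 0 (max Mg (max Mu MH))"
  have M0: "M \<ge> 0" by (simp add: M_def)
  have gM: "AE x in lborel. x \<notin> \<Omega> \<longrightarrow> \<bar>g x\<bar> \<le> M"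
    using Mg by eventually_elim (auto simp: M_def)
  have uM: "AE x in lborel. \<bar>u x\<bar> \<le> M"
    using Mu by eventually_elim (auto simp: M_def)
  have uHM: "AE x in lborel. \<bar>uH H x\<bar> \<le> M" if "H \<ge> 1" for H
    using MH that by (auto simp: M_def elim!: eventually_mono)
  have \<Omega>m: "\<Omega> \<in> sets borel" using dom(1) by auto
  define m where "m = measure lborel \<Omega>"
  have m: "emeasure lborel \<Omega> = ennreal m" "m \<ge> 0"
    using emeasure_bounded_finite[OF dom(3)] unfolding m_def
    by (auto simp: emeasure_eq_ennreal_measure)
  define e where "e = - 1 - 2 * s"
  define X where "X = 1 / (1 - 2 powr (real DIM('a) - (real DIM('a) + 2 * s + 1)))"
  define C where "C = 8 * m * M^2 * (unit_ball_vol DIM('a) * 2^DIM('a) * c1 powr e * X)"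
  have Ceq: "8 * m * M^2 * (unit_ball_vol DIM('a) * 2^DIM('a) * (c1 * H) powr e * X) = C * H powr e"
    if "H > 0" for H
    using that c(1) unfolding C_def by (simp add: powr_mult algebra_simps)
  show ?thesis
  proof (intro exI allI impI conjI)
    fix H :: real assume H: "H \<ge> 1"
    have H0: "H > 0" using H by simp
    have R: "c1 * H > 0" using c(1) H0 by simp
    have OH: "\<Omega> \<subseteq> OmH H" "\<forall>x\<in>frontier (OmH H). c1 * H \<le> infdist x (closure \<Omega>)"
      using OmH[OF H0] by auto
    have far: "\<And>x y. x \<in> \<Omega> \<Longrightarrow> y \<notin> OmH H \<Longrightarrow> c1 * H \<le> norm (x - y)"
      by (rule far_apart[OF _ OH(1) _ OH(2)])
    have eta1: "\<And>y. y \<notin> \<Omega> \<Longrightarrow> y \<in> OmH H \<Longrightarrow> eta H y = 1"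
      using eta[OF H0] by auto
    have eta01: "\<And>y. y \<notin> \<Omega> \<Longrightarrow> 0 \<le> eta H y \<and> eta H y \<le> 1"
      using eta[OF H0] by auto
    have geqA: "g y * eta H y = g y" if "y \<notin> \<Omega>" "y \<in> OmH H" for y
    proof -
      have "eta H y = 1" by (rule eta1[OF that])
      then show ?thesis by simp
    qed
    have geqB: "g y = g y * eta H y" if "y \<notin> \<Omega>" "y \<in> OmH H" for y
      using geqA[OF that] by simp
    have gM': "AE x in lborel. x \<notin> \<Omega> \<longrightarrow> \<bar>g x * eta H x\<bar> \<le> M"
      using gM
    proof eventually_elim
      case (elim x)
      show ?case
      proof
        assume x: "x \<notin> \<Omega>"
        have "\<bar>g x * eta H x\<bar> = \<bar>g x\<bar> * eta H x" using eta01[OF x] by (simp add: abs_mult)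
        also have "\<dots> \<le> \<bar>g x\<bar>" using eta01[OF x] by (simp add: mult_left_le)
        finally show "\<bar>g x * eta H x\<bar> \<le> M" using elim x by simp
      qed
    qed
    have A: "Is s \<Omega> u \<le> Is s \<Omega> (uH H) + ennreal (8 * m * M^2 *
       (unit_ball_vol DIM('a) * 2^DIM('a) * (c1 * H) powr (- 1 - 2 * s) *
       (1 / (1 - 2 powr (real DIM('a) - (real DIM('a) + 2 * s + 1))))))"
      by (rule one_side[OF s(1) R M0 \<Omega>m m far geqA uH_min[OF H] u_min uHM[OF H] gM])
    have B: "Is s \<Omega> (uH H) \<le> Is s \<Omega> u + ennreal (8 * m * M^2 *
       (unit_ball_vol DIM('a) * 2^DIM('a) * (c1 * H) powr (- 1 - 2 * s) *
       (1 / (1 - 2 powr (real DIM('a) - (real DIM('a) + 2 * s + 1))))))"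
      by (rule one_side[OF s(1) R M0 \<Omega>m m far geqB u_min uH_min[OF H] uM gM'])
    show "Is s \<Omega> u \<le> Is s \<Omega> (uH H) + ennreal (C * H powr (- 1 - 2 * s))"
      using A Ceq[OF H0] unfolding e_def X_def by simp
    show "Is s \<Omega> (uH H) \<le> Is s \<Omega> u + ennreal (C * H powr (- 1 - 2 * s))"
      using B Ceq[OF H0] unfolding e_def X_def by simp
  qed
qed


end
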